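(* Let $\gamma_0:[1,2]\to\mathbf{C}$ be the piecewise affine path with $\gamma_0(1)=-2+i$, $\gamma_0(1.25)=1+i$, $\gamma_0(1.5)=1-i$, $\gamma_0(1.75)=-1-i$, $\gamma_0(2)=-1+2i$, affine on each of the intervals $[1,1.25],[1.25,1.5],[1.5,1.75],[1.75,2]$. Then every continuous path $\gamma:[1,2]\to\mathbf{C}$ with $\sup_{t\in[1,2]}|\gamma(t)-\gamma_0(t)|<1/2$ separates $0$ from $\infty$, i.e. $0$ lies in a bounded connected component of $\mathbf{C}\setminus\gamma([1,2])$. *)

theory Defs
  imports "HOL-Analysis.Analysis"
begin

definition gamma0 :: "real \<Rightarrow> complex" where
  "gamma0 t =
    (if t \<le> 5/4 then linepath (Complex (-2) 1) (Complex 1 1) (4 * (t - 1))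
     else if t \<le> 3/2 then linepath (Complex 1 1) (Complex 1 (-1)) (4 * (t - 5/4))
     else if t \<le> 7/4 then linepath (Complex 1 (-1)) (Complex (-1) (-1)) (4 * (t - 3/2))
     else linepath (Complex (-1) (-1)) (Complex (-1) 2) (4 * (t - 7/4)))"

end

theory Submission
  imports Defs "HOL-Complex_Analysis.Complex_Analysis"
begin

lemma g0_1: "t \<le> 5/4 \<Longrightarrow> gamma0 t = Complex (12*t-14) 1"
  by (simp add: gamma0_def linepath_def complex_eq_iff algebra_simps)

lemma g0_2: "5/4 \<le> t \<Longrightarrow> t \<le> 3/2 \<Longrightarrow> gamma0 t = Complex 1 (11-8*t)"
  by (cases "t = 5/4") (auto simp add: gamma0_def linepath_def complex_eq_iff algebra_simps)

lemma g0_3: "3/2 \<le> t \<Longrightarrow> t \<le> 7/4 \<Longrightarrow> gamma0 t = Complex (13-8*t) (-1)"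
  by (cases "t = 3/2") (auto simp add: gamma0_def linepath_def complex_eq_iff algebra_simps)

lemma g0_4: "7/4 \<le> t \<Longrightarrow> gamma0 t = Complex (-1) (12*t-22)"
  by (cases "t = 7/4") (auto simp add: gamma0_def linepath_def complex_eq_iff algebra_simps)

lemma g0_bound: "1 \<le> t \<Longrightarrow> t \<le> 2 \<Longrightarrow> cmod (gamma0 t) \<le> 4"
proof -
  assume t: "1 \<le> t" "t \<le> 2"
  have "\<bar>Re (gamma0 t)\<bar> \<le> 2 \<and> \<bar>Im (gamma0 t)\<bar> \<le> 2"
  proof (cases "t \<le> 5/4")
    case True then show ?thesis using t g0_1 by auto
  next
    case f1: False
    show ?thesis
    proof (cases "t \<le> 3/2")
      case True then show ?thesis using t f1 g0_2 by auto
    next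
      case f2: False
      show ?thesis
      proof (cases "t \<le> 7/4")
        case True then show ?thesis using t f2 g0_3 by auto
      next
        case False then show ?thesis using t g0_4 by auto
      qed
    qed
  qed
  then show ?thesis using cmod_le[of "gamma0 t"] by linarith
qed

lemma seg_avoid:
  fixes a b w :: complex
  assumes "Re (w*a) > 0" "Re (w*b) > 0"
  shows "closed_segment a b \<subseteq> - {0}"
proof
  fix z assume "z \<in> closed_segment a b"
  then obtain u where u: "0 \<le> u" "u \<le> 1" "z = (1-u) *\<^sub>R a + u *\<^sub>R b"
    by (auto simp: in_segment)
  have "w*z = (1-u) *\<^sub>R (w*a) + u *\<^sub>R (w*b)"
    unfolding u(3) by (simp add: algebra_simps)
  then have "Re (w*z) = (1-u) * Re (w*a) + u * Re (w*b)"
    by simp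
  also have "\<dots> > 0"
  proof (cases "u = 0")
    case True then show ?thesis using assms by simp
  next
    case False then have "u > 0" using u by simp
    then show ?thesis using assms u
      by (smt (verit) mult_nonneg_nonneg mult_pos_pos)
  qed
  finally show "z \<in> - {0}" by auto
qed


lemma sigma_facts:
  fixes s t u :: real
  assumes st: "1 \<le> s" "s \<le> 5/4" "7/4 \<le> t" "t \<le> 2" and u: "0\<le>u" "u\<le>1"
  defines "\<sigma> \<equiv> s + (5/4-s)*max 0 (min 1 (4*u)) + 1/4*max 0 (min 1 (4*u-1))
      + 1/4*max 0 (min 1 (4*u-2)) + (t-7/4)*max 0 (min 1 (4*u-3))"
  shows "(u \<le> 1/4 \<longrightarrow> 1 \<le> \<sigma> \<and> \<sigma> \<le> 5/4) \<and> (1/4 \<le> u \<and> u \<le> 1/2 \<longrightarrow> 5/4 \<le> \<sigma> \<and> \<sigma> \<le> 3/2)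
    \<and> (1/2 \<le> u \<and> u \<le> 3/4 \<longrightarrow> 3/2 \<le> \<sigma> \<and> \<sigma> \<le> 7/4) \<and> (3/4 \<le> u \<longrightarrow> 7/4 \<le> \<sigma> \<and> \<sigma> \<le> 2)"
proof (intro conjI impI)
  assume h: "u \<le> 1/4"
  have e: "\<sigma> = s + (5/4-s)*(4*u)"
  proof (cases "u = 1/4")
    case True then show ?thesis unfolding \<sigma>_def True by simp
  next
    case False then show ?thesis unfolding \<sigma>_def using u h by (simp add: max_def min_def)
  qed
  have "(5/4-s)*(4*u) \<le> (5/4-s)" using st h u by (intro mult_left_le) auto
  moreover have "(5/4-s)*(4*u) \<ge> 0" using st u by simp
  ultimately show "1 \<le> \<sigma>" using e st by linarith
  show "\<sigma> \<le> 5/4" using e st \<open>(5/4-s)*(4*u) \<le> (5/4-s)\<close> by linarith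
next
  assume h: "1/4 \<le> u \<and> u \<le> 1/2"
  then have e: "\<sigma> = 1 + u" unfolding \<sigma>_def using u by (auto simp add: max_def min_def field_simps)
  show "5/4 \<le> \<sigma>" using e h by auto
  show "\<sigma> \<le> 3/2" using e h by auto
next
  assume h: "1/2 \<le> u \<and> u \<le> 3/4"
  have e: "\<sigma> = 1 + u"
  proof (cases "u = 3/4")
    case True then show ?thesis unfolding \<sigma>_def True by simp
  next
    case False then show ?thesis unfolding \<sigma>_def using u h by (auto simp add: max_def min_def field_simps)
  qed
  show "3/2 \<le> \<sigma>" using e h by auto
  show "\<sigma> \<le> 7/4" using e h by auto
next
  assume h: "3/4 \<le> u"
  then have e: "\<sigma> = 7/4 + (t-7/4)*(4*u-3)" unfolding \<sigma>_def using u by (auto simp add: max_def min_def field_simps)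
  have "(t-7/4)*(4*u-3) \<le> (t-7/4)" using st h u by (intro mult_left_le) auto
  moreover have "(t-7/4)*(4*u-3) \<ge> 0" using st u h by simp
  ultimately show "7/4 \<le> \<sigma>" using e st by linarith
  show "\<sigma> \<le> 2" using e st \<open>(t-7/4)*(4*u-3) \<le> (t-7/4)\<close> by linarith
qed

lemma c_formula:
  assumes "u \<in> {0..1}"
  shows "shiftpath (5/8) (reversepath (circlepath 0 1)) u = cis (3*pi/4 - 2*pi*u)"
proof (cases "5/8 + u \<le> 1")
  case True
  have "shiftpath (5/8) (reversepath (circlepath 0 1)) u = exp (\<i> * of_real (2*pi*(3/8 - u)))"
    using True by (simp add: shiftpath_def reversepath_def circlepath_def part_circlepath_def linepath_def algebra_simps)
  also have "\<dots> = cis (3*pi/4 - 2*pi*u)" by (simp add: cis_conv_exp algebra_simps)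
  finally show ?thesis .
next
  case False
  have "shiftpath (5/8) (reversepath (circlepath 0 1)) u = exp (\<i> * of_real (2*pi*(11/8 - u)))"
    using False by (simp add: shiftpath_def reversepath_def circlepath_def part_circlepath_def linepath_def algebra_simps)
  also have "\<dots> = cis ((3*pi/4 - 2*pi*u) + 2*pi)" by (simp add: cis_conv_exp algebra_simps)
  also have "\<dots> = cis (3*pi/4 - 2*pi*u)"
    using sin_periodic cos_periodic by (simp only: complex_eq_iff cis.sel)
  finally show ?thesis .
qed

lemma c_winding: "winding_number (shiftpath (5/8) (reversepath (circlepath 0 1))) 0 = -1"
proof -
  have p: "path (reversepath (circlepath 0 1))" by simp
  have n: "0 \<notin> path_image (reversepath (circlepath 0 1))" by simp
  have "winding_number (shiftpath (5/8) (reversepath (circlepath 0 1))) 0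
      = winding_number (reversepath (circlepath 0 1)) 0"
    by (rule winding_number_shiftpath[OF p n]) auto
  also have "\<dots> = - winding_number (circlepath 0 1) 0"
    by (rule winding_number_reversepath) simp_all
  also have "\<dots> = -1" by (simp add: winding_number_circlepath_centre)
  finally show ?thesis .
qed


theorem lemma7p2:
  fixes \<gamma> :: "real \<Rightarrow> complex"
  assumes "continuous_on {1..2} \<gamma>"
    and "(SUP t\<in>{1..2}. cmod (\<gamma> t - gamma0 t)) < 1/2"
  shows "\<exists>C \<in> components (- (\<gamma> ` {1..2})). 0 \<in> C \<and> bounded C"
proof -
  have "bounded (\<gamma> ` {1..2})"
    by (intro compact_imp_bounded compact_continuous_image assms(1)) simp
  then obtain M where M: "\<And>x. x \<in> \<gamma> ` {1..2} \<Longrightarrow> norm x \<le> M"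
    by (auto simp: bounded_iff)
  have bdd: "bdd_above ((\<lambda>t. cmod (\<gamma> t - gamma0 t)) ` {1..2})"
  proof (rule bdd_aboveI2)
    fix t :: real assume t: "t \<in> {1..2}"
    have "cmod (\<gamma> t - gamma0 t) \<le> cmod (\<gamma> t) + cmod (gamma0 t)" by (rule norm_triangle_ineq4)
    also have "\<dots> \<le> M + 4" using M[of "\<gamma> t"] g0_bound[of t] t by force
    finally show "cmod (\<gamma> t - gamma0 t) \<le> M + 4" .
  qed
  have close: "cmod (\<gamma> t - gamma0 t) < 1/2" if "t \<in> {1..2}" for t
    using cSUP_upper[OF that bdd] assms(2) by linarith
  have ReIm0: "\<bar>Re (\<gamma> t) - Re (gamma0 t)\<bar> < 1/2 \<and> \<bar>Im (\<gamma> t) - Im (gamma0 t)\<bar> < 1/2"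
    if "t \<in> {1..2}" for t
    using close[OF that] abs_Re_le_cmod[of "\<gamma> t - gamma0 t"] abs_Im_le_cmod[of "\<gamma> t - gamma0 t"]
    by auto
  have ReIm: "Re (\<gamma> t) < Re (gamma0 t) + 1/2 \<and> Re (\<gamma> t) > Re (gamma0 t) - 1/2 \<and>
     Im (\<gamma> t) < Im (gamma0 t) + 1/2 \<and> Im (\<gamma> t) > Im (gamma0 t) - 1/2"
    if "t \<in> {1..2}" for t
    using ReIm0[OF that] unfolding abs_less_iff by linarith
  have F1: "Im (\<gamma> t) > 1/2 \<and> Im (\<gamma> t) < 3/2" if "1 \<le> t" "t \<le> 5/4" for t
    using ReIm[of t] g0_1[of t] that by auto
  have F2: "Re (\<gamma> t) > 1/2" if "5/4 \<le> t" "t \<le> 3/2" for t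
    using ReIm[of t] g0_2[of t] that by auto
  have F3: "Im (\<gamma> t) < -1/2" if "3/2 \<le> t" "t \<le> 7/4" for t
    using ReIm[of t] g0_3[of t] that by auto
  have F4: "Re (\<gamma> t) < -1/2 \<and> Re (\<gamma> t) > -3/2" if "7/4 \<le> t" "t \<le> 2" for t
    using ReIm[of t] g0_4[of t] that by auto
  have E1: "Re (\<gamma> 1) < -3/2" using ReIm[of 1] g0_1[of 1] by auto
  have E2: "Re (\<gamma> (5/4)) > 1/2" using ReIm[of "5/4"] g0_1[of "5/4"] by auto
  have E3: "Im (\<gamma> (7/4)) < -1/2" using ReIm[of "7/4"] g0_4[of "7/4"] by auto
  have E4: "Im (\<gamma> 2) > 3/2" using ReIm[of 2] g0_4[of 2] by auto
  have nz: "\<gamma> t \<noteq> 0" if "t \<in> {1..2}" for t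
  proof -
    consider "t \<le> 5/4" | "5/4 \<le> t \<and> t \<le> 3/2" | "3/2 \<le> t \<and> t \<le> 7/4" | "7/4 \<le> t" by linarith
    then show ?thesis using that F1[of t] F2[of t] F3[of t] F4[of t] by cases auto
  qed
  \<comment> \<open>crossing via Fashoda\<close>
  define A where "A u = \<gamma> (1 + u/4)" for u
  define B where "B v = \<gamma> (7/4 + v/4)" for v
  have cA: "continuous_on {0..1} A" unfolding A_def
    by (rule continuous_on_compose2[OF assms(1)]) (auto intro!: continuous_intros)
  have cB: "continuous_on {0..1} B" unfolding B_def
    by (rule continuous_on_compose2[OF assms(1)]) (auto intro!: continuous_intros)
  define f :: "real \<Rightarrow> real^2" where
    "f u = (\<chi> i. if i = 1 then max (-3/2) (min (1/2) (Re (A u))) else Im (A u))" for u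
  define g :: "real \<Rightarrow> real^2" where
    "g v = (\<chi> i. if i = 1 then Re (B v) else max (-1/2) (min (3/2) (Im (B v))))" for v
  define a :: "real^2" where "a = (\<chi> i. if i = 1 then -3/2 else -1/2)"
  define b :: "real^2" where "b = (\<chi> i. if i = 1 then 1/2 else 3/2)"
  have two: "(2::2) \<noteq> 1" by simp
  have pf: "path f" unfolding path_def f_def
    by (intro continuous_on_vec_lambda, rename_tac i, case_tac "i = 1")
       (auto intro!: continuous_intros cA)
  have pg: "path g" unfolding path_def g_def
    by (intro continuous_on_vec_lambda, rename_tac i, case_tac "i = 1")
       (auto intro!: continuous_intros cB)
  have Aim: "Im (A u) > 1/2 \<and> Im (A u) < 3/2" if "u \<in> {0..1}" for u
    unfolding A_def using F1[of "1 + u/4"] that by auto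
  have Bre: "Re (B u) < -1/2 \<and> Re (B u) > -3/2" if "u \<in> {0..1}" for u
    unfolding B_def using F4[of "7/4 + u/4"] that by auto
  have ifb: "path_image f \<subseteq> cbox a b"
  proof
    fix z assume "z \<in> path_image f"
    then obtain u where u: "u \<in> {0..1}" "z = f u" unfolding path_image_def by auto
    show "z \<in> cbox a b" using Aim[OF u(1)] unfolding u(2) f_def a_def b_def mem_box_cart forall_2
      by (simp add: two max_def min_def)
  qed
  have igb: "path_image g \<subseteq> cbox a b"
  proof
    fix z assume "z \<in> path_image g"
    then obtain u where u: "u \<in> {0..1}" "z = g u" unfolding path_image_def by auto
    show "z \<in> cbox a b" using Bre[OF u(1)] unfolding u(2) g_def a_def b_def mem_box_cart forall_2
      by (simp add: two max_def min_def)
  qed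
  obtain z where z: "z \<in> path_image f" "z \<in> path_image g"
  proof (rule fashoda[OF pf pg ifb igb])
    show "pathstart f $ 1 = a $ 1" using E1
      by (simp add: pathstart_def f_def a_def A_def)
    show "pathfinish f $ 1 = b $ 1" using E2
      by (simp add: pathfinish_def f_def b_def A_def)
    show "pathstart g $ 2 = a $ 2" using E3
      by (simp add: pathstart_def g_def a_def B_def two)
    show "pathfinish g $ 2 = b $ 2" using E4
      by (simp add: pathfinish_def g_def b_def B_def two)
  qed
  then obtain u v where uv: "u \<in> {0..1}" "v \<in> {0..1}" "z = f u" "z = g v"
    unfolding path_image_def by auto
  have "Re (A u) = Re (B v)"
  proof -
    have "z $ 1 = Re (B v)" unfolding uv(4) by (simp add: g_def)
    moreover have "z $ 1 = max (-3/2) (min (1/2) (Re (A u)))" unfolding uv(3) by (simp add: f_def)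
    ultimately show ?thesis using Bre[OF uv(2)] by (auto simp: max_def min_def split: if_splits)
  qed
  moreover have "Im (A u) = Im (B v)"
  proof -
    have "z $ 2 = Im (A u)" unfolding uv(3) by (simp add: f_def two)
    moreover have "z $ 2 = max (-1/2) (min (3/2) (Im (B v)))" unfolding uv(4) by (simp add: g_def two)
    ultimately show ?thesis using Aim[OF uv(1)] by (auto simp: max_def min_def split: if_splits)
  qed
  ultimately have AB: "A u = B v" by (simp add: complex_eq_iff)
  define s where "s = 1 + u/4"
  define t where "t = 7/4 + v/4"
  have st: "1 \<le> s" "s \<le> 5/4" "7/4 \<le> t" "t \<le> 2" using uv unfolding s_def t_def by auto
  have gst: "\<gamma> s = \<gamma> t" using AB unfolding A_def B_def s_def t_def .
  define \<sigma> where "\<sigma> x = s + (5/4-s)*max 0 (min 1 (4*x)) + 1/4*max 0 (min 1 (4*x-1))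
      + 1/4*max 0 (min 1 (4*x-2)) + (t-7/4)*max 0 (min 1 (4*x-3))" for x
  have sf: "(x \<le> 1/4 \<longrightarrow> 1 \<le> \<sigma> x \<and> \<sigma> x \<le> 5/4) \<and> (1/4 \<le> x \<and> x \<le> 1/2 \<longrightarrow> 5/4 \<le> \<sigma> x \<and> \<sigma> x \<le> 3/2)
    \<and> (1/2 \<le> x \<and> x \<le> 3/4 \<longrightarrow> 3/2 \<le> \<sigma> x \<and> \<sigma> x \<le> 7/4) \<and> (3/4 \<le> x \<longrightarrow> 7/4 \<le> \<sigma> x \<and> \<sigma> x \<le> 2)"
    if "x \<in> {0..1}" for x
    unfolding \<sigma>_def using sigma_facts[OF st, of x] that by auto
  have sig12: "\<sigma> x \<in> {1..2}" if "x \<in> {0..1}" for x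
  proof -
    consider "x \<le> 1/4" | "1/4 \<le> x \<and> x \<le> 1/2" | "1/2 \<le> x \<and> x \<le> 3/4" | "3/4 \<le> x" by linarith
    then show ?thesis using sf[OF that] by cases auto
  qed
  define lp where "lp x = \<gamma> (\<sigma> x)" for x
  have pl: "path lp" unfolding path_def lp_def
  proof (rule continuous_on_compose2[OF assms(1)])
    show "continuous_on {0..1} \<sigma>" unfolding \<sigma>_def by (intro continuous_intros)
  qed (use sig12 in auto)
  have cl: "pathfinish lp = pathstart lp"
    using gst by (simp add: pathfinish_def pathstart_def lp_def \<sigma>_def)
  have pil: "path_image lp \<subseteq> \<gamma> ` {1..2}"
    unfolding path_image_def lp_def using sig12 by auto
  define c where "c = shiftpath (5/8) (reversepath (circlepath 0 (1::real)))"
  have pc: "path c" unfolding c_def by (intro path_shiftpath) auto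
  have cc: "pathfinish c = pathstart c" unfolding c_def by (intro closed_shiftpath) auto
  have "homotopic_loops (- {0}) lp c"
  proof (rule homotopic_loops_linear[OF pl pc cl cc])
    fix x :: real assume x: "x \<in> {0..1}"
    have cx: "c x = cis (3*pi/4 - 2*pi*x)" unfolding c_def by (rule c_formula[OF x])
    consider "x \<le> 1/4" | "1/4 \<le> x \<and> x \<le> 1/2" | "1/2 \<le> x \<and> x \<le> 3/4" | "3/4 \<le> x" by linarith
    then show "closed_segment (lp x) (c x) \<subseteq> - {0}"
    proof cases
      case 1
      have pl1: "pi * (0) \<le> pi * x" "pi * x \<le> pi * (1/4)"
        using x 1 pi_gt_zero by (intro mult_left_mono; simp)+
      have "Im (lp x) > 0" using F1[of "\<sigma> x"] sf[OF x] 1 unfolding lp_def by auto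
      moreover have "Im (c x) > 0" unfolding cx cis.simps using x 1
        using pl1 pi_gt_zero by (intro sin_gt_zero; linarith)
      ultimately show ?thesis by (intro seg_avoid[where w="-\<i>"]) auto
    next
      case 2
      have pl1: "pi * (1/4) \<le> pi * x" "pi * x \<le> pi * (1/2)"
        using x 2 pi_gt_zero by (intro mult_left_mono; simp)+
      have "Re (lp x) > 0" using F2[of "\<sigma> x"] sf[OF x] 2 unfolding lp_def by auto
      moreover have "Re (c x) > 0" unfolding cx cis.simps using x 2
        using pl1 pi_gt_zero by (intro cos_gt_zero_pi; linarith)
      ultimately show ?thesis by (intro seg_avoid[where w="1"]) auto
    next
      case 3
      have pl1: "pi * (1/2) \<le> pi * x" "pi * x \<le> pi * (3/4)"
        using x 3 pi_gt_zero by (intro mult_left_mono; simp)+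
      have "Im (lp x) < 0" using F3[of "\<sigma> x"] sf[OF x] 3 unfolding lp_def by auto
      moreover have "sin (-(3*pi/4 - 2*pi*x)) > 0" using pl1 pi_gt_zero
        by (intro sin_gt_zero; linarith)
      then have "Im (c x) < 0" unfolding cx cis.simps using sin_minus[of "3*pi/4 - 2*pi*x"] by linarith
      ultimately show ?thesis by (intro seg_avoid[where w="\<i>"]) auto
    next
      case 4
      have pl1: "pi * (3/4) \<le> pi * x" "pi * x \<le> pi * (1)"
        using x 4 pi_gt_zero by (intro mult_left_mono; simp)+
      have "Re (lp x) < 0" using F4[of "\<sigma> x"] sf[OF x] 4 unfolding lp_def by auto
      moreover have "cos ((3*pi/4 - 2*pi*x) + pi) > 0" using pl1 pi_gt_zero
        by (intro cos_gt_zero_pi; linarith)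
      then have "Re (c x) < 0" unfolding cx cis.simps using cos_periodic_pi[of "3*pi/4 - 2*pi*x"] by linarith
      ultimately show ?thesis by (intro seg_avoid[where w="-1"]) auto
    qed
  qed
  then have "winding_number lp 0 = winding_number c 0"
    by (rule winding_number_homotopic_loops)
  also have "\<dots> = -1" unfolding c_def by (rule c_winding)
  finally have wn: "winding_number lp 0 \<noteq> 0" by simp
  have "0 \<notin> outside (path_image lp)"
    using winding_number_zero_in_outside[OF pl cl] wn by blast
  then have bd: "bounded (connected_component_set (- path_image lp) 0)"
    unfolding outside_def
  proof (cases "0 \<in> path_image lp")
    case True
    then show ?thesis using pil nz by force
  qed auto
  have z0: "0 \<in> - (\<gamma> ` {1..2})" using nz by force
  have "connected_component_set (- (\<gamma> ` {1..2})) 0 \<subseteq> connected_component_set (- path_image lp) 0"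
    by (rule connected_component_mono) (use pil in auto)
  then have "bounded (connected_component_set (- (\<gamma> ` {1..2})) 0)"
    using bd bounded_subset by blast
  moreover have "connected_component_set (- (\<gamma> ` {1..2})) 0 \<in> components (- (\<gamma> ` {1..2}))"
    using z0 by (simp add: components_def)
  moreover have "0 \<in> connected_component_set (- (\<gamma> ` {1..2})) 0"
    using z0 by simp
  ultimately show ?thesis by blast
qed

end
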